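(* For $n\in\mathbb{N}$, let $K_n^0$ be the complete graph on $\{0,1,\dots,n\}$ rooted at $0$. Then $\mathrm{PPF}_n=\mathrm{PPF}(K_n^0)$. Consequently $|\mathrm{PPF}(K_n^0)|=|\mathrm{SR}(K_n^0)|=(n-1)^{n-1}$.
   Context: $[n]=\{1,\dots,n\}$. A classical parking function of size $n$ is $p=(p_1,\dots,p_n)\in[n]^n$ with $|\{j: p_j\le i\}|\ge i$ for all $i\in[n]$; $\mathrm{PF}_n$ is their set. $p\in\mathrm{PF}_n$ has a breakpoint at $j\in[n]$ if $|\{i\in[n]:p_i\le j\}|=j$; $p$ is prime if its only breakpoint is $j=n$; $\mathrm{PPF}_n$ is the set of prime parking functions of size $n$. Functions on $[n]$ are identified with tuples. For a rooted graph $G=(\Gamma,s)$ (finite, undirected, loopless multigraph with sink $s$), $V$ is the vertex set, $\tilde V=V\setminus\{s\}$, $\mathrm{mult}(vw)$ the number of edges between $v,w$, $\deg^A(v)=\sum_{w\in A}\mathrm{mult}(vw)$, $\deg(v)=\deg^V(v)$. A $G$-parking function is $p:\tilde V\to\{1,2,\dots\}$ such that every nonempty $S\subseteq\tilde V$ contains $v$ with $p(v)\le\deg^{V\setminus S}(v)$. With $G^A$ the induced subgraph on $A\cup\{s\}$ rooted at $s$, $p$ is decomposable w.r.t. an ordered partition $(A,B)$ of $\tilde V$ into nonempty blocks if $p|_A$ is a $G^A$-parking function and $v\mapsto p(v)-\deg^A(v)$ on $B$ is a $G^B$-parking function; $p$ is prime if decomposable w.r.t. no such partition; $\mathrm{PPF}(G)$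 is the set of prime $G$-parking functions. A configuration $c:\tilde V\to\mathbb{Z}$ is stable if $c(v)<\deg(v)$ for all $v$; a stable $c$ is recurrent if there is no nonempty $F\subseteq\tilde V$ with $c(v)<\deg^F(v)$ for all $v\in F$; with $V_M(c)=\{v: c(v)\ge\deg(v)-\mathrm{mult}(vs)\}$ and $c^{v-}=c-\sum_{w\ne v}\mathrm{mult}(ws)\mathbf 1_w$, a recurrent $c$ is strongly recurrent if $c^{v-}$ is recurrent for all $v\in V_M(c)$; $\mathrm{SR}(G)$ is their set. *)

theory Defs
  imports "HOL-Library.FuncSet"
begin

definition PF :: "nat \<Rightarrow> (nat \<Rightarrow> int) set" where
  "PF n = {p \<in> {1..n} \<rightarrow>\<^sub>E {1..int n}.
             \<forall>i\<in>{1..n}. card {j\<in>{1..n}. p j \<le> int i} \<ge> i}"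

definition breakpoint :: "nat \<Rightarrow> (nat \<Rightarrow> int) \<Rightarrow> nat \<Rightarrow> bool" where
  "breakpoint n p j \<longleftrightarrow> j \<in> {1..n} \<and> card {i\<in>{1..n}. p i \<le> int j} = j"

definition PPF :: "nat \<Rightarrow> (nat \<Rightarrow> int) set" where
  "PPF n = {p \<in> PF n. \<forall>j. breakpoint n p j \<longrightarrow> j = n}"

text \<open>A rooted multigraph is given by a finite vertex set V, a symmetric
  multiplicity function mult (with mult v v = 0) and a sink s in V.
  The reduced vertex set is V - {s}.\<close>

definition deg_on :: "('a \<Rightarrow> 'a \<Rightarrow> nat) \<Rightarrow> 'a set \<Rightarrow> 'a \<Rightarrow> nat" where
  "deg_on mult A v = (\<Sum>w\<in>A. mult v w)"

definition is_gpf :: "'a set \<Rightarrow> ('a \<Rightarrow> 'a \<Rightarrow> nat) \<Rightarrow> 'a \<Rightarrow> ('a \<Rightarrow> int) \<Rightarrow> bool" where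
  "is_gpf V mult s p \<longleftrightarrow>
     p \<in> extensional (V - {s}) \<and> (\<forall>v\<in>V - {s}. p v \<ge> 1) \<and>
     (\<forall>S. S \<subseteq> V - {s} \<and> S \<noteq> {} \<longrightarrow> (\<exists>v\<in>S. p v \<le> int (deg_on mult (V - S) v)))"

text \<open>Induced subgraph G^A on A \<union> {s}: same multiplicity function, vertex set A \<union> {s}.\<close>

definition decomposable ::
  "'a set \<Rightarrow> ('a \<Rightarrow> 'a \<Rightarrow> nat) \<Rightarrow> 'a \<Rightarrow> ('a \<Rightarrow> int) \<Rightarrow> 'a set \<Rightarrow> 'a set \<Rightarrow> bool" where
  "decomposable V mult s p A B \<longleftrightarrow>
     A \<noteq> {} \<and> B \<noteq> {} \<and> A \<union> B = V - {s} \<and> A \<inter> B = {} \<and>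
     is_gpf (A \<union> {s}) mult s (restrict p A) \<and>
     is_gpf (B \<union> {s}) mult s (\<lambda>v\<in>B. p v - int (deg_on mult A v))"

definition PPF_G :: "'a set \<Rightarrow> ('a \<Rightarrow> 'a \<Rightarrow> nat) \<Rightarrow> 'a \<Rightarrow> ('a \<Rightarrow> int) set" where
  "PPF_G V mult s = {p. is_gpf V mult s p \<and> \<not> (\<exists>A B. decomposable V mult s p A B)}"

definition stable :: "'a set \<Rightarrow> ('a \<Rightarrow> 'a \<Rightarrow> nat) \<Rightarrow> 'a \<Rightarrow> ('a \<Rightarrow> int) \<Rightarrow> bool" where
  "stable V mult s c \<longleftrightarrow> (\<forall>v\<in>V - {s}. c v < int (deg_on mult V v))"

definition recurrent :: "'a set \<Rightarrow> ('a \<Rightarrow> 'a \<Rightarrow> nat) \<Rightarrow> 'a \<Rightarrow> ('a \<Rightarrow> int) \<Rightarrow> bool" where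
  "recurrent V mult s c \<longleftrightarrow> stable V mult s c \<and>
     \<not> (\<exists>F. F \<subseteq> V - {s} \<and> F \<noteq> {} \<and> (\<forall>v\<in>F. c v < int (deg_on mult F v)))"

definition VM :: "'a set \<Rightarrow> ('a \<Rightarrow> 'a \<Rightarrow> nat) \<Rightarrow> 'a \<Rightarrow> ('a \<Rightarrow> int) \<Rightarrow> 'a set" where
  "VM V mult s c = {v\<in>V - {s}. c v \<ge> int (deg_on mult V v) - int (mult v s)}"

definition cminus :: "'a set \<Rightarrow> ('a \<Rightarrow> 'a \<Rightarrow> nat) \<Rightarrow> 'a \<Rightarrow> ('a \<Rightarrow> int) \<Rightarrow> 'a \<Rightarrow> ('a \<Rightarrow> int)" where
  "cminus V mult s c v = (\<lambda>w\<in>V - {s}. if w \<noteq> v then c w - int (mult w s) else c w)"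

definition strongly_recurrent :: "'a set \<Rightarrow> ('a \<Rightarrow> 'a \<Rightarrow> nat) \<Rightarrow> 'a \<Rightarrow> ('a \<Rightarrow> int) \<Rightarrow> bool" where
  "strongly_recurrent V mult s c \<longleftrightarrow> recurrent V mult s c \<and>
     (\<forall>v\<in>VM V mult s c. recurrent V mult s (cminus V mult s c v))"

definition SR :: "'a set \<Rightarrow> ('a \<Rightarrow> 'a \<Rightarrow> nat) \<Rightarrow> 'a \<Rightarrow> ('a \<Rightarrow> int) set" where
  "SR V mult s = {c. c \<in> extensional (V - {s}) \<and> strongly_recurrent V mult s c}"

definition K_mult :: "nat \<Rightarrow> nat \<Rightarrow> nat" where
  "K_mult v w = (if v \<noteq> w then 1 else 0)"

end

theory Submission
  imports Defs
begin

lemma deg_K: "finite X \<Longrightarrow> deg_on K_mult X v = card (X - {v})"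
proof -
  assume f: "finite X"
  have "deg_on K_mult X v = (\<Sum>w\<in>X. if w \<in> X - {v} then 1 else 0)"
    unfolding deg_on_def K_mult_def by (intro sum.cong) auto
  also have "\<dots> = card (X - {v})" using f by (simp add: sum.If_cases Int_absorb1 Diff_eq Compl_eq)
  finally show ?thesis .
qed

lemma gpf_char:
  assumes fA: "finite A" and A0: "0 \<notin> A"
  shows "is_gpf (A \<union> {0}) K_mult 0 p \<longleftrightarrow>
     p \<in> extensional A \<and> (\<forall>v\<in>A. p v \<ge> 1) \<and>
     (\<forall>i\<in>{1..card A}. card {j\<in>A. p j \<le> int i} \<ge> i)"
proof -
  have AA: "A \<union> {0} - {0} = A" using A0 by auto
  have deg: "deg_on K_mult (A \<union> {0} - S) v = card A + 1 - card S" if "S \<subseteq> A" "v \<in> S" for S v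
  proof -
    have fS: "finite S" using that fA finite_subset by blast
    have "deg_on K_mult (A \<union> {0} - S) v = card (A \<union> {0} - S)"
      using deg_K[of "A \<union> {0} - S" v] fA that by (metis Diff_empty Diff_insert0 DiffD2 finite.emptyI finite.insertI finite_Diff finite_UnI)
    also have "\<dots> = card (A \<union> {0}) - card S" using that fA by (subst card_Diff_subset) (auto intro: finite_subset)
    also have "card (A \<union> {0}) = card A + 1" using fA A0 by simp
    finally show ?thesis .
  qed
  have L: "(\<forall>S. S \<subseteq> A \<and> S \<noteq> {} \<longrightarrow> (\<exists>v\<in>S. p v \<le> int (deg_on K_mult (A \<union> {0} - S) v)))
        \<longleftrightarrow> (\<forall>i\<in>{1..card A}. card {j\<in>A. p j \<le> int i} \<ge> i)"
  proof
    assume H: "\<forall>S. S \<subseteq> A \<and> S \<noteq> {} \<longrightarrow> (\<exists>v\<in>S. p v \<le> int (deg_on K_mult (A \<union> {0} - S) v))"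
    show "\<forall>i\<in>{1..card A}. card {j\<in>A. p j \<le> int i} \<ge> i"
    proof
      fix i assume i: "i \<in> {1..card A}"
      define S where "S = {j\<in>A. p j > int i}"
      have SA: "S \<subseteq> A" unfolding S_def by auto
      have cs: "card {j\<in>A. p j \<le> int i} = card A - card S"
      proof -
        have "{j\<in>A. p j \<le> int i} = A - S" unfolding S_def by auto
        thus ?thesis using SA fA by (simp add: card_Diff_subset finite_subset)
      qed
      show "card {j\<in>A. p j \<le> int i} \<ge> i"
      proof (cases "S = {}")
        case True then show ?thesis using cs i by simp
      next
        case False
        then obtain v where v: "v \<in> S" "p v \<le> int (deg_on K_mult (A \<union> {0} - S) v)" using H SA by blast
        have "p v > int i" using v(1) unfolding S_def by auto
        moreover have "card S \<le> card A" using SA fA card_mono by blast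
        ultimately have "card S \<le> card A - i" using v(2) deg[OF SA v(1)] by linarith
        then show ?thesis using cs i by (simp; arith)
      qed
    qed
  next
    assume H: "\<forall>i\<in>{1..card A}. card {j\<in>A. p j \<le> int i} \<ge> i"
    show "\<forall>S. S \<subseteq> A \<and> S \<noteq> {} \<longrightarrow> (\<exists>v\<in>S. p v \<le> int (deg_on K_mult (A \<union> {0} - S) v))"
    proof (intro allI impI)
      fix S assume S: "S \<subseteq> A \<and> S \<noteq> {}"
      have fS: "finite S" using S fA finite_subset by blast
      have k1: "card S \<ge> 1" using S fS by (simp add: Suc_leI card_gt_0_iff)
      have kA: "card S \<le> card A" using S fA card_mono by blast
      show "\<exists>v\<in>S. p v \<le> int (deg_on K_mult (A \<union> {0} - S) v)"
      proof (rule ccontr)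
        assume "\<not> ?thesis"
        hence gt: "\<forall>v\<in>S. p v > int (card A + 1 - card S)" using deg S by force
        define i where "i = card A + 1 - card S"
        have i: "i \<in> {1..card A}" unfolding i_def using k1 kA by auto
        have "{j\<in>A. p j \<le> int i} \<subseteq> A - S" using gt unfolding i_def by auto
        hence "card {j\<in>A. p j \<le> int i} \<le> card (A - S)" using fA by (simp add: card_mono)
        also have "\<dots> = card A - card S" using S fS by (simp add: card_Diff_subset)
        finally show False using H i unfolding i_def using k1 kA by fastforce
      qed
    qed
  qed
  show ?thesis unfolding is_gpf_def AA using L by blast
qed

definition Nc :: "nat \<Rightarrow> (nat \<Rightarrow> int) \<Rightarrow> nat \<Rightarrow> nat" where
  "Nc n p i = card {j\<in>{1..n}. p j \<le> int i}"

lemma PF_char: "p \<in> PF n \<longleftrightarrow> p \<in> extensional {1..n} \<and> (\<forall>v\<in>{1..n}. p v \<ge> 1) \<and> (\<forall>i\<in>{1..n}. Nc n p i \<ge> i)"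
proof
  assume "p \<in> PF n" thus "p \<in> extensional {1..n} \<and> (\<forall>v\<in>{1..n}. p v \<ge> 1) \<and> (\<forall>i\<in>{1..n}. Nc n p i \<ge> i)"
    unfolding PF_def Nc_def by (auto simp: PiE_def Pi_def)
next
  assume H: "p \<in> extensional {1..n} \<and> (\<forall>v\<in>{1..n}. p v \<ge> 1) \<and> (\<forall>i\<in>{1..n}. Nc n p i \<ge> i)"
  have ub: "p v \<le> int n" if v: "v \<in> {1..n}" for v
  proof -
    have "n \<in> {1..n}" using v by auto
    hence "card {j\<in>{1..n}. p j \<le> int n} \<ge> card {1..n}" using H unfolding Nc_def by auto
    hence "{j\<in>{1..n}. p j \<le> int n} = {1..n}" by (intro card_seteq) auto
    thus ?thesis using v by blast
  qed
  show "p \<in> PF n" unfolding PF_def Nc_def using H ub by (auto simp: PiE_def Pi_def Nc_def)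
qed

lemma gpf_V: "is_gpf {0..n} K_mult 0 p \<longleftrightarrow> p \<in> PF n"
proof -
  have "{0..n} = {1..n} \<union> {0::nat}" by auto
  thus ?thesis using gpf_char[of "{1..n}" p] unfolding PF_char Nc_def by simp
qed


lemma decomp_iff:
  assumes pPF: "p \<in> PF n"
  shows "(\<exists>A B. decomposable {0..n} K_mult 0 p A B) \<longleftrightarrow> (\<exists>j\<in>{1..<n}. Nc n p j = j)"
proof
  assume "\<exists>A B. decomposable {0..n} K_mult 0 p A B"
  then obtain A B where D: "decomposable {0..n} K_mult 0 p A B" by blast
  have D': "A \<noteq> {} \<and> B \<noteq> {} \<and> A \<union> B = {0..n} - {0} \<and> A \<inter> B = {} \<and>
     is_gpf (A \<union> {0}) K_mult 0 (restrict p A) \<and>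
     is_gpf (B \<union> {0}) K_mult 0 (\<lambda>v\<in>B. p v - int (deg_on K_mult A v))"
    using D unfolding decomposable_def by blast
  have e: "{0..n} - {0} = {1..n}" by auto
  have AB: "A \<noteq> {}" "B \<noteq> {}" "A \<union> B = {1..n}" "A \<inter> B = {}"
    using D' e by simp_all
  have gA: "is_gpf (A \<union> {0}) K_mult 0 (restrict p A)" and
       gB: "is_gpf (B \<union> {0}) K_mult 0 (\<lambda>v\<in>B. p v - int (deg_on K_mult A v))"
    using D' by simp_all
  have AS: "A \<subseteq> {1..n}" and BS: "B \<subseteq> {1..n}" using AB(3) by blast+
  have fA: "finite A" using AS finite_subset by blast
  have fB: "finite B" using BS finite_subset by blast
  have A0: "0 \<notin> A" using AS by auto
  have B0: "0 \<notin> B" using BS by auto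
  define a where "a = card A"
  have a1: "a \<ge> 1" using fA AB(1) unfolding a_def by (simp add: Suc_leI card_gt_0_iff)
  have an: "a < n"
  proof -
    have "A \<subset> {1..n}" using AB by auto
    hence "card A < card {1..n}" by (intro psubset_card_mono) auto
    thus ?thesis unfolding a_def by simp
  qed
  have cA: "\<forall>i\<in>{1..a}. card {j\<in>A. restrict p A j \<le> int i} \<ge> i"
    using gA gpf_char[OF fA A0] unfolding a_def by blast
  hence "card {j\<in>A. restrict p A j \<le> int a} \<ge> card A" using a1 unfolding a_def by auto
  hence "{j\<in>A. restrict p A j \<le> int a} = A" using fA by (intro card_seteq) auto
  hence Ale: "\<forall>x\<in>A. p x \<le> int a" by (metis (no_types, lifting) mem_Collect_eq restrict_apply')
  have B1: "\<forall>v\<in>B. (\<lambda>v\<in>B. p v - int (deg_on K_mult A v)) v \<ge> 1"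
    using gB gpf_char[OF fB B0] by blast
  have dA: "deg_on K_mult A v = a" if "v \<in> B" for v
  proof -
    have "A - {v} = A" using that AB(4) by blast
    thus ?thesis using deg_K[OF fA, of v] unfolding a_def by simp
  qed
  have Bgt: "p x > int a" if "x \<in> B" for x
  proof -
    have "(\<lambda>v\<in>B. p v - int (deg_on K_mult A v)) x \<ge> 1" using B1 that by blast
    thus ?thesis using dA[OF that] that by simp
  qed
  have "{j\<in>{1..n}. p j \<le> int a} = A"
  proof (rule set_eqI)
    fix x show "x \<in> {j\<in>{1..n}. p j \<le> int a} \<longleftrightarrow> x \<in> A"
    proof
      assume x: "x \<in> {j\<in>{1..n}. p j \<le> int a}"
      hence "x \<in> A \<or> x \<in> B" using AB(3) by blast
      thus "x \<in> A" using x Bgt by force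
    next
      assume "x \<in> A" thus "x \<in> {j\<in>{1..n}. p j \<le> int a}" using Ale AS by blast
    qed
  qed
  hence "Nc n p a = a" unfolding Nc_def a_def by simp
  thus "\<exists>j\<in>{1..<n}. Nc n p j = j" using a1 an by auto
next
  assume "\<exists>j\<in>{1..<n}. Nc n p j = j"
  then obtain j where j: "j \<in> {1..<n}" "Nc n p j = j" by blast
  have P: "p \<in> extensional {1..n}" "\<forall>v\<in>{1..n}. p v \<ge> 1" "\<forall>i\<in>{1..n}. Nc n p i \<ge> i"
    using pPF unfolding PF_char by auto
  define A where "A = {i\<in>{1..n}. p i \<le> int j}"
  define B where "B = {i\<in>{1..n}. \<not> p i \<le> int j}"
  have cA: "card A = j" using j unfolding A_def Nc_def by simp
  have fA: "finite A" and A0: "0 \<notin> A" and fB: "finite B" and B0: "0 \<notin> B"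
    unfolding A_def B_def by auto
  have BA: "B = {1..n} - A" unfolding A_def B_def by auto
  have cB: "card B = n - j" unfolding BA using cA by (subst card_Diff_subset) (auto simp: A_def)
  have e: "{0..n} - {0} = {1..n}" by auto
  have AB: "A \<noteq> {}" "B \<noteq> {}" "A \<union> B = {0..n} - {0}" "A \<inter> B = {}"
  proof -
    show "A \<noteq> {}" using cA j by auto
    show "B \<noteq> {}" using cB j by auto
    show "A \<union> B = {0..n} - {0}" unfolding e A_def B_def by blast
    show "A \<inter> B = {}" unfolding A_def B_def by blast
  qed
  have degA: "deg_on K_mult A v = j" if "v \<in> B" for v
  proof -
    have "A - {v} = A" using that AB(4) by blast
    thus ?thesis using deg_K[OF fA, of v] cA by simp
  qed
  have gA: "is_gpf (A \<union> {0}) K_mult 0 (restrict p A)"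
    unfolding gpf_char[OF fA A0]
  proof (intro conjI ballI)
    show "restrict p A \<in> extensional A" by simp
    show "1 \<le> restrict p A v" if "v \<in> A" for v using that P(2) unfolding A_def by auto
    fix i assume i: "i \<in> {1..card A}"
    have "{x\<in>A. restrict p A x \<le> int i} = {x\<in>{1..n}. p x \<le> int i}"
      using i cA unfolding A_def by auto
    thus "i \<le> card {x\<in>A. restrict p A x \<le> int i}" using P(3) i cA j unfolding Nc_def by auto
  qed
  have gB: "is_gpf (B \<union> {0}) K_mult 0 (\<lambda>v\<in>B. p v - int (deg_on K_mult A v))"
    unfolding gpf_char[OF fB B0]
  proof (intro conjI ballI)
    show "(\<lambda>v\<in>B. p v - int (deg_on K_mult A v)) \<in> extensional B" by simp
    show "1 \<le> (\<lambda>v\<in>B. p v - int (deg_on K_mult A v)) v" if "v \<in> B" for v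
      using that degA unfolding B_def by auto
    fix i assume i: "i \<in> {1..card B}"
    have "{x\<in>B. (\<lambda>v\<in>B. p v - int (deg_on K_mult A v)) x \<le> int i} = {x\<in>{1..n}. p x \<le> int (i + j)} - A"
      using degA unfolding A_def B_def by auto
    also have "card \<dots> = Nc n p (i + j) - j"
      unfolding Nc_def using cA by (subst card_Diff_subset) (auto simp: A_def)
    finally have ce: "card {x\<in>B. (\<lambda>v\<in>B. p v - int (deg_on K_mult A v)) x \<le> int i} = Nc n p (i + j) - j" .
    have ij: "i + j \<le> n" using i cB j by auto
    have "Nc n p (i + j) \<ge> i + j" using P(3) ij j by auto
    thus "i \<le> card {x\<in>B. (\<lambda>v\<in>B. p v - int (deg_on K_mult A v)) x \<le> int i}"
      unfolding ce by linarith
  qed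
  have "decomposable {0..n} K_mult 0 p A B" unfolding decomposable_def using AB gA gB by blast
  thus "\<exists>A B. decomposable {0..n} K_mult 0 p A B" by blast
qed

lemma part1: "PPF n = PPF_G {0..n} K_mult 0"
proof -
  have "p \<in> PPF n \<longleftrightarrow> p \<in> PPF_G {0..n} K_mult 0" for p
  proof -
    have "p \<in> PPF n \<longleftrightarrow> p \<in> PF n \<and> \<not> (\<exists>j\<in>{1..<n}. Nc n p j = j)"
      unfolding PPF_def breakpoint_def Nc_def by auto
    also have "\<dots> \<longleftrightarrow> p \<in> PPF_G {0..n} K_mult 0"
      unfolding PPF_G_def using decomp_iff[of p n] gpf_V[of n p] by auto
    finally show ?thesis .
  qed
  thus ?thesis by blast
qed


lemma PPF_iff: "p \<in> PPF n \<longleftrightarrow> p \<in> PF n \<and> \<not> (\<exists>j\<in>{1..<n}. Nc n p j = j)"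
  unfolding PPF_def breakpoint_def Nc_def by auto

definition phi :: "nat \<Rightarrow> (nat \<Rightarrow> int) \<Rightarrow> (nat \<Rightarrow> int)" where
  "phi n c = (\<lambda>v\<in>{1..n}. int n - c v)"

lemma deg_in: "F \<subseteq> {1..n} \<Longrightarrow> v \<in> F \<Longrightarrow> deg_on K_mult F v = card F - 1"
  using deg_K[of F v] by (simp add: finite_subset)

lemma deg_out: "F \<subseteq> {1..n} \<Longrightarrow> v \<in> F \<Longrightarrow> deg_on K_mult ({0..n} - F) v = n + 1 - card F"
proof -
  assume F: "F \<subseteq> {1..n}" "v \<in> F"
  have "{0..n} - F - {v} = {0..n} - F" using F by auto
  hence "deg_on K_mult ({0..n} - F) v = card ({0..n} - F)" using deg_K[of "{0..n} - F" v] by simp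
  also have "\<dots> = n + 1 - card F" using F by (subst card_Diff_subset) (auto intro: finite_subset)
  finally show ?thesis .
qed

lemma deg_V: "v \<in> {1..n} \<Longrightarrow> deg_on K_mult {0..n} v = n"
  using deg_K[of "{0..n}" v] by simp

lemma rec_gpf:
  assumes ce: "c \<in> extensional {1..n}"
  shows "recurrent {0..n} K_mult 0 c \<longleftrightarrow> is_gpf {0..n} K_mult 0 (phi n c)"
proof -
  have e: "{0..n} - {0} = {1..n}" by auto
  have pv: "phi n c v = int n - c v" if "v \<in> {1..n}" for v using that by (simp add: phi_def)
  have st: "stable {0..n} K_mult 0 c \<longleftrightarrow> (\<forall>v\<in>{1..n}. phi n c v \<ge> 1)"
  proof -
    have "c v < int (deg_on K_mult {0..n} v) \<longleftrightarrow> phi n c v \<ge> 1" if "v \<in> {1..n}" for v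
      using pv[OF that] deg_V[OF that] by (simp; linarith)
    thus ?thesis unfolding stable_def e by blast
  qed
  have fr: "(\<exists>F. F \<subseteq> {1..n} \<and> F \<noteq> {} \<and> (\<forall>v\<in>F. c v < int (deg_on K_mult F v)))
      \<longleftrightarrow> \<not> (\<forall>S. S \<subseteq> {1..n} \<and> S \<noteq> {} \<longrightarrow> (\<exists>v\<in>S. phi n c v \<le> int (deg_on K_mult ({0..n} - S) v)))"
  proof -
    have "(\<forall>v\<in>F. c v < int (deg_on K_mult F v)) \<longleftrightarrow> \<not> (\<exists>v\<in>F. phi n c v \<le> int (deg_on K_mult ({0..n} - F) v))"
      if F: "F \<subseteq> {1..n}" "F \<noteq> {}" for F
    proof -
      have fF: "finite F" using F(1) finite_subset by blast
      have k1: "card F \<ge> 1" using fF F(2) by (simp add: Suc_leI card_gt_0_iff)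
      have k2: "card F \<le> n" using card_mono[of "{1..n}" F] F(1) by simp
      have "c v < int (deg_on K_mult F v) \<longleftrightarrow> \<not> phi n c v \<le> int (deg_on K_mult ({0..n} - F) v)"
        if v: "v \<in> F" for v
      proof -
        have a: "phi n c v = int n - c v" using pv v F(1) by blast
        have b: "int (deg_on K_mult F v) = int (card F) - 1" using deg_in[OF F(1) v] k1 by simp
        have d: "int (deg_on K_mult ({0..n} - F) v) = int n + 1 - int (card F)" using deg_out[OF F(1) v] k2 by simp
        show ?thesis unfolding a b d by linarith
      qed
      thus ?thesis by blast
    qed
    thus ?thesis by blast
  qed
  have ext: "phi n c \<in> extensional {1..n}" by (simp add: phi_def)
  show ?thesis unfolding recurrent_def is_gpf_def st e using fr ext by blast
qed

lemma bump:
  assumes pPF: "p \<in> PF n" and v: "v \<in> {1..n}" and pv: "p v = 1"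
  shows "(\<lambda>w\<in>{1..n}. if w \<noteq> v then p w + 1 else p w) \<in> PF n \<longleftrightarrow> \<not> (\<exists>j\<in>{1..<n}. Nc n p j = j)"
proof -
  define q where "q = (\<lambda>w\<in>{1..n}. if w \<noteq> v then p w + 1 else p w)"
  have P: "p \<in> extensional {1..n}" "\<forall>v\<in>{1..n}. p v \<ge> 1" "\<forall>i\<in>{1..n}. Nc n p i \<ge> i"
    using pPF unfolding PF_char by auto
  have q1: "\<forall>w\<in>{1..n}. q w \<ge> 1" using P(2) unfolding q_def by auto
  have N1: "Nc n q 1 \<ge> 1"
  proof -
    have "v \<in> {j\<in>{1..n}. q j \<le> int 1}" using v pv unfolding q_def by auto
    hence "{j\<in>{1..n}. q j \<le> int 1} \<noteq> {}" by blast
    thus ?thesis unfolding Nc_def by (simp add: Suc_leI card_gt_0_iff)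
  qed
  have N2: "Nc n q i = Nc n p (i - 1)" if i: "i \<ge> 2" for i
  proof -
    have "{j\<in>{1..n}. q j \<le> int i} = {j\<in>{1..n}. p j \<le> int (i - 1)}"
      using i pv unfolding q_def by auto
    thus ?thesis unfolding Nc_def by simp
  qed
  have "q \<in> PF n \<longleftrightarrow> (\<forall>i\<in>{1..n}. Nc n q i \<ge> i)" unfolding PF_char q_def using q1 unfolding q_def by auto
  also have "\<dots> \<longleftrightarrow> (\<forall>j\<in>{1..<n}. Nc n p j \<ge> j + 1)"
  proof
    assume H: "\<forall>i\<in>{1..n}. Nc n q i \<ge> i"
    show "\<forall>j\<in>{1..<n}. Nc n p j \<ge> j + 1"
    proof
      fix j assume j: "j \<in> {1..<n}"
      have "Nc n q (j + 1) \<ge> j + 1" using H j by auto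
      thus "Nc n p j \<ge> j + 1" using N2[of "j+1"] j by auto
    qed
  next
    assume H: "\<forall>j\<in>{1..<n}. Nc n p j \<ge> j + 1"
    show "\<forall>i\<in>{1..n}. Nc n q i \<ge> i"
    proof
      fix i assume i: "i \<in> {1..n}"
      show "Nc n q i \<ge> i"
      proof (cases "i = 1")
        case True thus ?thesis using N1 by simp
      next
        case False
        hence "i \<ge> 2" using i by auto
        moreover have "i - 1 \<in> {1..<n}" using i \<open>i \<ge> 2\<close> by auto
        ultimately show ?thesis using N2[of i] H by fastforce
      qed
    qed
  qed
  also have "\<dots> \<longleftrightarrow> \<not> (\<exists>j\<in>{1..<n}. Nc n p j = j)"
  proof -
    have "Nc n p j \<ge> j + 1 \<longleftrightarrow> Nc n p j \<noteq> j" if "j \<in> {1..<n}" for j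
    proof -
      have "j \<in> {1..n}" using that by auto
      hence "Nc n p j \<ge> j" using P(3) by blast
      thus ?thesis by auto
    qed
    thus ?thesis by blast
  qed
  finally show ?thesis unfolding q_def .
qed


lemma SR_char:
  assumes n1: "n \<ge> 1"
  shows "c \<in> SR {0..n} K_mult 0 \<longleftrightarrow> c \<in> extensional {1..n} \<and> phi n c \<in> PPF n"
proof (cases "c \<in> extensional {1..n}")
  case False
  have e: "{0..n} - {0} = {1..n}" by auto
  show ?thesis using False unfolding SR_def e by blast
next
  case ce: True
  define p where "p = phi n c"
  have e: "{0..n} - {0} = {1..n}" by auto
  have rec: "recurrent {0..n} K_mult 0 c \<longleftrightarrow> p \<in> PF n"
    using rec_gpf[OF ce] gpf_V unfolding p_def by blast
  have vm: "v \<in> VM {0..n} K_mult 0 c \<longleftrightarrow> v \<in> {1..n} \<and> p v \<le> 1" for v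
  proof -
    have "v \<in> VM {0..n} K_mult 0 c \<longleftrightarrow> v \<in> {1..n} \<and> c v \<ge> int (deg_on K_mult {0..n} v) - int (K_mult v 0)"
      unfolding VM_def e by blast
    also have "\<dots> \<longleftrightarrow> v \<in> {1..n} \<and> p v \<le> 1"
    proof (cases "v \<in> {1..n}")
      case True
      hence "K_mult v 0 = 1" by (simp add: K_mult_def)
      thus ?thesis using True deg_V[OF True] unfolding p_def phi_def by auto
    next
      case False thus ?thesis by blast
    qed
    finally show ?thesis .
  qed
  have cmext: "cminus {0..n} K_mult 0 c v \<in> extensional {1..n}" for v
    unfolding cminus_def e by simp
  have cmphi: "phi n (cminus {0..n} K_mult 0 c v) = (\<lambda>w\<in>{1..n}. if w \<noteq> v then p w + 1 else p w)" for v
  proof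
    fix w show "phi n (cminus {0..n} K_mult 0 c v) w = (\<lambda>w\<in>{1..n}. if w \<noteq> v then p w + 1 else p w) w"
    proof (cases "w \<in> {1..n}")
      case True
      hence "K_mult w 0 = 1" by (simp add: K_mult_def)
      thus ?thesis using True unfolding p_def phi_def cminus_def e by auto
    next
      case False thus ?thesis unfolding phi_def by (simp only: restrict_apply if_False)
    qed
  qed
  have cmrec: "recurrent {0..n} K_mult 0 (cminus {0..n} K_mult 0 c v) \<longleftrightarrow>
     (\<lambda>w\<in>{1..n}. if w \<noteq> v then p w + 1 else p w) \<in> PF n" for v
    using rec_gpf[OF cmext[of v]] gpf_V cmphi[of v] by simp
  have "c \<in> SR {0..n} K_mult 0 \<longleftrightarrow> p \<in> PF n \<and>
      (\<forall>v. v \<in> {1..n} \<and> p v \<le> 1 \<longrightarrow> (\<lambda>w\<in>{1..n}. if w \<noteq> v then p w + 1 else p w) \<in> PF n)"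
    unfolding SR_def strongly_recurrent_def e using ce rec vm cmrec by blast
  also have "\<dots> \<longleftrightarrow> p \<in> PPF n"
  proof
    assume H: "p \<in> PF n \<and> (\<forall>v. v \<in> {1..n} \<and> p v \<le> 1 \<longrightarrow> (\<lambda>w\<in>{1..n}. if w \<noteq> v then p w + 1 else p w) \<in> PF n)"
    have P: "\<forall>v\<in>{1..n}. p v \<ge> 1" "\<forall>i\<in>{1..n}. Nc n p i \<ge> i" using H unfolding PF_char by auto
    have "Nc n p 1 \<ge> 1" using P(2) n1 by auto
    hence "{j\<in>{1..n}. p j \<le> int 1} \<noteq> {}" unfolding Nc_def by (metis card.empty not_one_le_zero)
    then obtain v where v: "v \<in> {1..n}" "p v \<le> 1" by auto
    hence pv: "p v = 1" using P(1) by force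
    show "p \<in> PPF n" unfolding PPF_iff using H bump[of p n v] v pv by blast
  next
    assume H: "p \<in> PPF n"
    hence pf: "p \<in> PF n" and nb: "\<not> (\<exists>j\<in>{1..<n}. Nc n p j = j)" unfolding PPF_iff by auto
    have P: "\<forall>v\<in>{1..n}. p v \<ge> 1" using pf unfolding PF_char by auto
    show "p \<in> PF n \<and> (\<forall>v. v \<in> {1..n} \<and> p v \<le> 1 \<longrightarrow> (\<lambda>w\<in>{1..n}. if w \<noteq> v then p w + 1 else p w) \<in> PF n)"
    proof (intro conjI allI impI)
      fix v assume v: "v \<in> {1..n} \<and> p v \<le> 1"
      hence "p v = 1" using P by force
      thus "(\<lambda>w\<in>{1..n}. if w \<noteq> v then p w + 1 else p w) \<in> PF n" using bump[OF pf, of v] v nb by blast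
    qed (rule pf)
  qed
  finally show ?thesis using ce unfolding p_def by blast
qed

lemma phi_phi: "c \<in> extensional {1..n} \<Longrightarrow> phi n (phi n c) = c"
  unfolding phi_def by (rule extensionalityI[of _ "{1..n}"]) auto

lemma PPF_ext: "p \<in> PPF n \<Longrightarrow> p \<in> extensional {1..n}"
  unfolding PPF_iff PF_char by blast

lemma card_SR: "n \<ge> 1 \<Longrightarrow> card (SR {0..n} K_mult 0) = card (PPF n)"
proof -
  assume n1: "n \<ge> 1"
  have "bij_betw (phi n) (SR {0..n} K_mult 0) (PPF n)"
  proof (rule bij_betw_byWitness[where f' = "phi n"])
    show "\<forall>a\<in>SR {0..n} K_mult 0. phi n (phi n a) = a" using SR_char[OF n1] phi_phi by blast
    show "\<forall>a'\<in>PPF n. phi n (phi n a') = a'" using PPF_ext phi_phi by blast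
    show "phi n ` SR {0..n} K_mult 0 \<subseteq> PPF n" using SR_char[OF n1] by blast
    show "phi n ` PPF n \<subseteq> SR {0..n} K_mult 0"
    proof
      fix c assume "c \<in> phi n ` PPF n"
      then obtain p where p: "p \<in> PPF n" "c = phi n p" by blast
      have "c \<in> extensional {1..n}" unfolding p(2) phi_def by simp
      moreover have "phi n c \<in> PPF n" using p PPF_ext phi_phi by metis
      ultimately show "c \<in> SR {0..n} K_mult 0" using SR_char[OF n1] by blast
    qed
  qed
  thus ?thesis by (rule bij_betw_same_card)
qed


lemma mod_cases_int:
  fixes x m :: int
  assumes "0 \<le> x" "x < 2 * m"
  shows "x mod m = (if x < m then x else x - m)"
proof (cases "x < m")
  case True thus ?thesis using assms by simp
next
  case False
  have "(x - m) mod m = x - m" using False assms by (intro mod_pos_pos_trivial) auto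
  hence "x mod m = x - m" by (simp add: minus_mod_self2)
  thus ?thesis using False by simp
qed

definition sh :: "nat \<Rightarrow> nat \<Rightarrow> nat \<Rightarrow> (nat \<Rightarrow> int) \<Rightarrow> (nat \<Rightarrow> int)" where
  "sh n m k p = (\<lambda>j\<in>{1..n}. (p j - 1 + int k) mod int m + 1)"

context
  fixes n m :: nat
  assumes nm: "n = Suc m" and m1: "m \<ge> 1"
begin

definition U where "U = {1..n} \<rightarrow>\<^sub>E {1..int m}"

lemma PPF_U: "p \<in> PPF n \<longleftrightarrow> p \<in> U \<and> (\<forall>i\<in>{1..m}. Nc n p i > i)"
proof
  assume H: "p \<in> PPF n"
  hence pf: "p \<in> PF n" and nb: "\<not> (\<exists>j\<in>{1..<n}. Nc n p j = j)" unfolding PPF_iff by auto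
  have P: "p \<in> extensional {1..n}" "\<forall>v\<in>{1..n}. p v \<ge> 1" "\<forall>i\<in>{1..n}. Nc n p i \<ge> i"
    using pf unfolding PF_char by auto
  have gt: "\<forall>i\<in>{1..m}. Nc n p i > i"
  proof
    fix i assume i: "i \<in> {1..m}"
    hence "i \<in> {1..n}" "i \<in> {1..<n}" using nm by auto
    hence "Nc n p i \<ge> i" "Nc n p i \<noteq> i" using P(3) nb by blast+
    thus "Nc n p i > i" by simp
  qed
  have "Nc n p m \<ge> n" using gt m1 nm by force
  hence "card {j\<in>{1..n}. p j \<le> int m} \<ge> card {1..n}" unfolding Nc_def by simp
  hence "{j\<in>{1..n}. p j \<le> int m} = {1..n}" by (intro card_seteq) auto
  hence "\<forall>v\<in>{1..n}. p v \<le> int m" by blast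
  hence "p \<in> U" unfolding U_def using P(1,2) by (auto simp: PiE_iff)
  thus "p \<in> U \<and> (\<forall>i\<in>{1..m}. Nc n p i > i)" using gt by blast
next
  assume H: "p \<in> U \<and> (\<forall>i\<in>{1..m}. Nc n p i > i)"
  have ext: "p \<in> extensional {1..n}" and vals: "\<forall>v\<in>{1..n}. p v \<ge> 1 \<and> p v \<le> int m"
    using H unfolding U_def by (auto simp: PiE_iff)
  have Nn: "Nc n p n = n"
  proof -
    have "{j\<in>{1..n}. p j \<le> int n} = {1..n}" using vals nm by force
    thus ?thesis unfolding Nc_def by simp
  qed
  have "\<forall>i\<in>{1..n}. Nc n p i \<ge> i"
  proof
    fix i assume i: "i \<in> {1..n}"
    show "Nc n p i \<ge> i"
    proof (cases "i = n")
      case True thus ?thesis using Nn by simp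
    next
      case False
      hence "i \<in> {1..m}" using i nm by auto
      thus ?thesis using H by fastforce
    qed
  qed
  hence pf: "p \<in> PF n" unfolding PF_char using ext vals by blast
  have "\<not> (\<exists>j\<in>{1..<n}. Nc n p j = j)"
  proof
    assume "\<exists>j\<in>{1..<n}. Nc n p j = j"
    then obtain j where j: "j \<in> {1..<n}" "Nc n p j = j" by blast
    hence "j \<in> {1..m}" using nm by auto
    thus False using H j by fastforce
  qed
  thus "p \<in> PPF n" unfolding PPF_iff using pf by blast
qed

lemma sh_U: "sh n m k p \<in> U"
proof -
  have "(x + int k) mod int m + 1 \<in> {1..int m}" for x
  proof -
    have "0 \<le> (x + int k) mod int m" "(x + int k) mod int m < int m" using m1 by simp_all
    thus ?thesis by simp
  qed
  thus ?thesis unfolding sh_def U_def by auto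
qed

lemma sh_0: "p \<in> U \<Longrightarrow> sh n m 0 p = p"
proof -
  assume p: "p \<in> U"
  show ?thesis
  proof (rule extensionalityI[of _ "{1..n}"])
    show "sh n m 0 p \<in> extensional {1..n}" unfolding sh_def by simp
    show "p \<in> extensional {1..n}" using p unfolding U_def by (simp add: PiE_iff)
    fix j assume j: "j \<in> {1..n}"
    hence "p j \<in> {1..int m}" using p unfolding U_def by (auto simp: PiE_iff)
    thus "sh n m 0 p j = p j" using j unfolding sh_def by simp
  qed
qed

lemma sh_sh: "sh n m a (sh n m b p) = sh n m ((a + b) mod m) p"
proof (rule extensionalityI[of _ "{1..n}"])
  show "sh n m a (sh n m b p) \<in> extensional {1..n}" "sh n m ((a + b) mod m) p \<in> extensional {1..n}"
    unfolding sh_def by simp_all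
  fix j assume j: "j \<in> {1..n}"
  have "((p j - 1 + int b) mod int m + int a) mod int m = (p j - 1 + int b + int a) mod int m"
    by (simp add: mod_add_left_eq)
  also have "\<dots> = (p j - 1 + (int a + int b) mod int m) mod int m"
    by (simp add: mod_add_right_eq add.commute add.left_commute)
  finally show "sh n m a (sh n m b p) j = sh n m ((a + b) mod m) p j"
    using j unfolding sh_def by (simp add: zmod_int)
qed

lemma sh_not_P:
  assumes q: "q \<in> PPF n" and d: "d \<in> {1..<m}"
  shows "sh n m d q \<notin> PPF n"
proof
  assume H: "sh n m d q \<in> PPF n"
  have qU: "q \<in> U" and qgt: "\<forall>i\<in>{1..m}. Nc n q i > i" using q PPF_U by auto
  have vals: "\<forall>v\<in>{1..n}. q v \<ge> 1 \<and> q v \<le> int m" using qU unfolding U_def by (auto simp: PiE_iff)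
  have "{j\<in>{1..n}. sh n m d q j \<le> int d} = {1..n} - {j\<in>{1..n}. q j \<le> int (m - d)}"
  proof (rule set_eqI)
    fix j
    show "j \<in> {j\<in>{1..n}. sh n m d q j \<le> int d} \<longleftrightarrow> j \<in> {1..n} - {j\<in>{1..n}. q j \<le> int (m - d)}"
    proof (cases "j \<in> {1..n}")
      case True
      have v: "q j \<ge> 1" "q j \<le> int m" using vals True by auto
      have mc: "(q j - 1 + int d) mod int m = (if q j - 1 + int d < int m then q j - 1 + int d else q j - 1 + int d - int m)"
        by (rule mod_cases_int) (use v d in auto)
      show ?thesis using True v d mc unfolding sh_def by auto
    qed auto
  qed
  hence "Nc n (sh n m d q) d = card ({1..n} - {j\<in>{1..n}. q j \<le> int (m - d)})"
    unfolding Nc_def by simp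
  also have "\<dots> = n - Nc n q (m - d)"
    unfolding Nc_def by (subst card_Diff_subset) auto
  finally have "Nc n (sh n m d q) d = n - Nc n q (m - d)" .
  moreover have "Nc n q (m - d) > m - d" using qgt d by auto
  ultimately have "Nc n (sh n m d q) d \<le> d" using nm d by auto
  moreover have "Nc n (sh n m d q) d > d" using H PPF_U d by auto
  ultimately show False by simp
qed

lemma sh_exists:
  assumes f: "f \<in> U"
  shows "\<exists>k<m. sh n m k f \<in> PPF n"
proof -
  have vals: "\<forall>v\<in>{1..n}. f v \<ge> 1 \<and> f v \<le> int m" using f unfolding U_def by (auto simp: PiE_iff)
  define g where "g t = int (Nc n f t) - int t" for t
  define mu where "mu = Min (g ` {1..m})"
  have mu: "\<forall>t\<in>{1..m}. mu \<le> g t" "mu \<in> g ` {1..m}" unfolding mu_def using m1 by auto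
  define r where "r = Max {t\<in>{1..m}. g t = mu}"
  have ne: "{t\<in>{1..m}. g t = mu} \<noteq> {}" using mu(2) by auto
  have r: "r \<in> {1..m}" "g r = mu" using Max_in[OF _ ne] unfolding r_def by auto
  have rge: "\<forall>t\<in>{1..m}. g t \<ge> g r" using mu(1) r by auto
  have rgt: "\<forall>t. r < t \<and> t \<le> m \<longrightarrow> g t > g r"
  proof (intro allI impI)
    fix t assume t: "r < t \<and> t \<le> m"
    have "g t \<noteq> mu"
    proof
      assume "g t = mu"
      hence "t \<le> r" unfolding r_def using t by (intro Max_ge) auto
      thus False using t by simp
    qed
    moreover have "t \<in> {1..m}" using t r by auto
    hence "mu \<le> g t" using mu(1) by blast
    ultimately show "g t > g r" using r(2) by linarith
  qed
  define k where "k = m - r"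
  have km: "k < m" using r unfolding k_def by auto
  have mc: "(f j - 1 + int k) mod int m = (if f j - 1 + int k < int m then f j - 1 + int k else f j - 1 + int k - int m)"
    if j: "j \<in> {1..n}" for j
  proof -
    have v: "1 \<le> f j" "f j \<le> int m" using vals j by auto
    show ?thesis by (rule mod_cases_int) (use v km in auto)
  qed
  have Nsub: "Nc n f a \<le> Nc n f b" if "a \<le> b" for a b
    unfolding Nc_def using that by (intro card_mono) auto
  have "\<forall>i\<in>{1..m}. Nc n (sh n m k f) i > i"
  proof
    fix t assume t: "t \<in> {1..m}"
    show "Nc n (sh n m k f) t > t"
    proof (cases "t \<le> k")
      case True
      have "{j\<in>{1..n}. sh n m k f j \<le> int t} = {j\<in>{1..n}. f j \<le> int (r + t)} - {j\<in>{1..n}. f j \<le> int r}"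
      proof (rule set_eqI)
        fix j show "j \<in> {j\<in>{1..n}. sh n m k f j \<le> int t} \<longleftrightarrow> j \<in> {j\<in>{1..n}. f j \<le> int (r + t)} - {j\<in>{1..n}. f j \<le> int r}"
        proof (cases "j \<in> {1..n}")
          case jn: True
          have v: "1 \<le> f j" "f j \<le> int m" using vals jn by auto
          show ?thesis using jn mc[OF jn] v True t r unfolding sh_def k_def by auto
        qed auto
      qed
      hence "Nc n (sh n m k f) t = card ({j\<in>{1..n}. f j \<le> int (r + t)} - {j\<in>{1..n}. f j \<le> int r})"
        unfolding Nc_def by simp
      also have "\<dots> = Nc n f (r + t) - Nc n f r"
        unfolding Nc_def by (subst card_Diff_subset) auto
      finally have e: "Nc n (sh n m k f) t = Nc n f (r + t) - Nc n f r" .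
      have "g (r + t) > g r" using rgt True t unfolding k_def by auto
      thus ?thesis unfolding e g_def by linarith
    next
      case False
      have "{j\<in>{1..n}. sh n m k f j \<le> int t} = {j\<in>{1..n}. f j \<le> int (t - k)} \<union> ({1..n} - {j\<in>{1..n}. f j \<le> int r})"
      proof (rule set_eqI)
        fix j show "j \<in> {j\<in>{1..n}. sh n m k f j \<le> int t} \<longleftrightarrow> j \<in> {j\<in>{1..n}. f j \<le> int (t - k)} \<union> ({1..n} - {j\<in>{1..n}. f j \<le> int r})"
        proof (cases "j \<in> {1..n}")
          case jn: True
          have v: "1 \<le> f j" "f j \<le> int m" using vals jn by auto
          show ?thesis using jn mc[OF jn] v False t r unfolding sh_def k_def by auto
        qed auto
      qed
      hence "Nc n (sh n m k f) t = card ({j\<in>{1..n}. f j \<le> int (t - k)} \<union> ({1..n} - {j\<in>{1..n}. f j \<le> int r}))"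
        unfolding Nc_def by simp
      also have "\<dots> = Nc n f (t - k) + card ({1..n} - {j\<in>{1..n}. f j \<le> int r})"
        unfolding Nc_def using False t r unfolding k_def by (subst card_Un_disjoint) auto
      also have "card ({1..n} - {j\<in>{1..n}. f j \<le> int r}) = n - Nc n f r"
        unfolding Nc_def by (subst card_Diff_subset) auto
      finally have e: "Nc n (sh n m k f) t = Nc n f (t - k) + (n - Nc n f r)" .
      have tk: "t - k \<in> {1..m}" "t - k \<le> r" using False t r unfolding k_def by auto
      have "g (t - k) \<ge> g r" using rge tk by auto
      moreover have "Nc n f r \<le> n"
      proof -
        have "Nc n f r \<le> card {1..n}" unfolding Nc_def by (rule card_mono) auto
        thus ?thesis by simp
      qed
      ultimately have A: "int (Nc n f r) - int r \<le> int (Nc n f (t - k)) - int (t - k)" and C: "Nc n f r \<le> n"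
        unfolding g_def by auto
      have B: "int (t - k) = int t - int m + int r" using False r unfolding k_def by auto
      have "int t < int (Nc n f (t - k)) + (int n - int (Nc n f r))" using A B nm by simp
      hence "int t < int (Nc n f (t - k) + (n - Nc n f r))" using C by simp
      thus ?thesis unfolding e by linarith
    qed
  qed
  hence "sh n m k f \<in> PPF n" using PPF_U sh_U by blast
  thus ?thesis using km by blast
qed

lemma card_PPF_m: "card (PPF n) = m ^ m"
proof -
  have PU: "PPF n \<subseteq> U" using PPF_U by blast
  have bij: "bij_betw (\<lambda>(q, k). sh n m k q) (PPF n \<times> {0..<m}) U"
  proof (rule bij_betwI')
    fix x y assume x: "x \<in> PPF n \<times> {0..<m}" and y: "y \<in> PPF n \<times> {0..<m}"
    obtain q k where qk: "x = (q, k)" "q \<in> PPF n" "k < m" using x by auto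
    obtain q' k' where qk': "y = (q', k')" "q' \<in> PPF n" "k' < m" using y by auto
    show "((\<lambda>(q, k). sh n m k q) x = (\<lambda>(q, k). sh n m k q) y) = (x = y)"
    proof
      assume "(\<lambda>(q, k). sh n m k q) x = (\<lambda>(q, k). sh n m k q) y"
      hence eq: "sh n m k q = sh n m k' q'" using qk qk' by simp
      define d where "d = (m - k' + k) mod m"
      have "sh n m (m - k') (sh n m k q) = sh n m d q" unfolding d_def sh_sh by (simp add: add.commute)
      moreover have "sh n m (m - k') (sh n m k' q') = q'"
        unfolding sh_sh using qk' PU sh_0 by auto
      ultimately have q'd: "q' = sh n m d q" using eq by simp
      have d0: "d = 0"
      proof (rule ccontr)
        assume "d \<noteq> 0"
        hence "d \<in> {1..<m}" unfolding d_def using m1 by auto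
        thus False using sh_not_P[OF qk(2)] q'd qk'(2) by blast
      qed
      have "k = k'"
      proof -
        have "m dvd (m - k' + k)" using d0 unfolding d_def by auto
        moreover have "m - k' + k > 0" "m - k' + k < 2 * m" using qk qk' by auto
        ultimately have "m - k' + k = m"
        proof -
          assume dv: "m dvd (m - k' + k)" and b: "m - k' + k > 0" "m - k' + k < 2 * m"
          obtain c where c: "m - k' + k = m * c" using dv by blast
          have "c \<noteq> 0" using c b by auto
          moreover have "c < 2"
          proof (rule ccontr)
            assume "\<not> c < 2"
            hence "m * c \<ge> m * 2" by simp
            thus False using c b by linarith
          qed
          ultimately have "c = 1" by linarith
          thus ?thesis using c by simp
        qed
        thus ?thesis using qk' by auto
      qed
      moreover have "q' = q" using q'd d0 sh_0 qk(2) PU by auto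
      ultimately show "x = y" using qk qk' by simp
    qed simp
  next
    fix x assume "x \<in> PPF n \<times> {0..<m}"
    thus "(\<lambda>(q, k). sh n m k q) x \<in> U" using sh_U by auto
  next
    fix f assume f: "f \<in> U"
    then obtain k where k: "k < m" "sh n m k f \<in> PPF n" using sh_exists by blast
    have "sh n m ((m - k) mod m) (sh n m k f) = sh n m 0 f"
      unfolding sh_sh using k by (simp add: mod_add_left_eq)
    hence "f = sh n m ((m - k) mod m) (sh n m k f)" using sh_0[OF f] by simp
    moreover have "(sh n m k f, (m - k) mod m) \<in> PPF n \<times> {0..<m}" using k m1 by auto
    ultimately show "\<exists>x\<in>PPF n \<times> {0..<m}. f = (\<lambda>(q, k). sh n m k q) x" by force
  qed
  have "card U = m ^ n" unfolding U_def by (simp add: card_PiE)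
  also have "card U = card (PPF n) * m" using bij_betw_same_card[OF bij] by (simp add: card_cartesian_product)
  finally have "card (PPF n) * m = m * m ^ m" using nm by simp
  thus ?thesis using m1 by simp
qed

end

lemma card_PPF_1: "card (PPF 1) = 1"
proof -
  have "PPF 1 = PF 1" using PPF_iff[of _ 1] by auto
  also have "PF 1 = {1..1} \<rightarrow>\<^sub>E {1..int 1}"
  proof -
    have "card {j\<in>{1..1::nat}. p j \<le> int i} \<ge> i" if "p \<in> {1..1} \<rightarrow>\<^sub>E {1..int 1}" "i \<in> {1..1}" for p i
    proof -
      have "{j\<in>{1..1::nat}. p j \<le> int i} = {1}" using that by (auto simp: PiE_iff)
      thus ?thesis using that by simp
    qed
    thus ?thesis unfolding PF_def by blast
  qed
  also have "card \<dots> = 1" by (simp add: card_PiE)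
  finally show ?thesis .
qed

lemma card_PPF: "n \<ge> 1 \<Longrightarrow> card (PPF n) = (n - 1) ^ (n - 1)"
proof -
  assume n1: "n \<ge> 1"
  show ?thesis
  proof (cases "n = 1")
    case True thus ?thesis using card_PPF_1 by simp
  next
    case False
    hence "n = Suc (n - 1)" "n - 1 \<ge> 1" using n1 by auto
    thus ?thesis using card_PPF_m[of n "n - 1"] by simp
  qed
qed

theorem proposition3p4:
  fixes n :: nat
  assumes "n \<ge> 1"
  shows "PPF n = PPF_G {0..n} K_mult 0
       \<and> card (PPF_G {0..n} K_mult 0) = (n - 1) ^ (n - 1)
       \<and> card (SR {0..n} K_mult 0) = (n - 1) ^ (n - 1)"
  using part1[of n] card_PPF[OF assms] card_SR[OF assms] by simp

end
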